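(* Let $M_{inf}=\begin{bmatrix}1&0&0&1\\1&1&0&1\end{bmatrix}$. The polyomino class $Av_{\mathfrak{P}}(M_{inf})$ has an infinite $p$-basis.
   Context: A polyomino is a finite union of unit cells of $\mathbb{Z}\times\mathbb{Z}$ that is connected via edge adjacency, up to translation. It is identified with the binary matrix of its minimal bounding rectangle: placing it in the positive quarter plane touching both axes, entry $(i,j)$ is $1$ iff the unit square $[j-1,j]\times[i-1,i]$ is a cell (rows numbered from bottom to top; in displayed matrices the first written row is the top row). A matrix $M'$ is a submatrix of $M$ if it is obtained by deleting rows and/or columns; the pattern order on polyominoes is the submatrix order restricted to polyominoes. $Av_{\mathfrak{P}}(M)$ is the set of polyominoes not containing $M$ as a submatrix; it is a polyomino class (downward closed set). The $p$-basis of a polyomino class $\mathcal{C}$ is the set of polyominoes not in $\mathcal{C}$ that are minimal for the pattern order among polyominoes not in $\mathcal{C}$. *)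

theory Defs
  imports Main
begin

text \<open>Binary matrices are lists of rows; the first list element is the TOP row
  (as matrices are displayed).  Entry (i,j) = M ! i ! j.\<close>

type_synonym bmat = "bool list list"

definition nrows :: "bmat \<Rightarrow> nat" where
  "nrows M = length M"

definition ncols :: "bmat \<Rightarrow> nat" where
  "ncols M = (if M = [] then 0 else length (hd M))"

definition is_matrix :: "bmat \<Rightarrow> bool" where
  "is_matrix M \<longleftrightarrow> M \<noteq> [] \<and> ncols M > 0 \<and> (\<forall>r\<in>set M. length r = ncols M)"

definition submatrix :: "bmat \<Rightarrow> bmat \<Rightarrow> bool" where
  "submatrix M' M \<longleftrightarrow> (\<exists>R C. M' = map (\<lambda>row. nths row C) (nths M R))"

definition cells :: "bmat \<Rightarrow> (nat \<times> nat) set" where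
  "cells M = {(i, j). i < nrows M \<and> j < ncols M \<and> M ! i ! j}"

definition edge_adj :: "nat \<times> nat \<Rightarrow> nat \<times> nat \<Rightarrow> bool" where
  "edge_adj a b \<longleftrightarrow>
     (fst a = fst b \<and> (snd b = snd a + 1 \<or> snd a = snd b + 1)) \<or>
     (snd a = snd b \<and> (fst b = fst a + 1 \<or> fst a = fst b + 1))"

definition polyomino :: "bmat \<Rightarrow> bool" where
  "polyomino P \<longleftrightarrow> is_matrix P
     \<and> (\<forall>i < nrows P. \<exists>j < ncols P. P ! i ! j)
     \<and> (\<forall>j < ncols P. \<exists>i < nrows P. P ! i ! j)
     \<and> (\<forall>x\<in>cells P. \<forall>y\<in>cells P.
           (x, y) \<in> {(a, b). a \<in> cells P \<and> b \<in> cells P \<and> edge_adj a b}\<^sup>*)"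

definition Av_P :: "bmat \<Rightarrow> bmat set" where
  "Av_P M = {P. polyomino P \<and> \<not> submatrix M P}"

definition p_basis :: "bmat set \<Rightarrow> bmat set" where
  "p_basis C = {P. polyomino P \<and> P \<notin> C \<and>
      \<not> (\<exists>Q. polyomino Q \<and> Q \<notin> C \<and> submatrix Q P \<and> Q \<noteq> P)}"

definition M_inf :: bmat where
  "M_inf = [[True, False, False, True],
            [True, True,  False, True]]"

end

theory Submission imports Defs begin

definition sm :: "(nat \<Rightarrow> nat \<Rightarrow> bool) \<Rightarrow> nat list \<Rightarrow> nat list \<Rightarrow> bmat" where
  "sm f rs cs = map (\<lambda>i. map (f i) cs) rs"

lemma sub_sm:
  assumes "submatrix M (sm f rs cs)"
  shows "\<exists>R C. M = sm f (nths rs R) (nths cs C)"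
proof -
  from assms obtain R C where "M = map (\<lambda>row. nths row C) (nths (sm f rs cs) R)"
    unfolding submatrix_def by blast
  hence "M = sm f (nths rs R) (nths cs C)"
    by (simp add: sm_def nths_map)
  thus ?thesis by blast
qed

lemma strict_nths: "sorted_wrt (<) (xs::nat list) \<Longrightarrow> sorted_wrt (<) (nths xs I)"
  using sorted_nths[of xs I] distinct_nthsI[of xs I] by (simp add: strict_sorted_iff)

lemma strict_nth_less_iff:
  assumes "sorted_wrt (<) (xs::nat list)" "i < length xs" "k < length xs"
  shows "xs ! i < xs ! k \<longleftrightarrow> i < k"
  using assms sorted_wrt_nth_less[of "(<)" xs] 
  by (metis linorder_neqE_nat order_less_asym)

lemma nrows_sm: "nrows (sm f rs cs) = length rs" by (simp add: nrows_def sm_def)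
lemma ncols_sm: "rs \<noteq> [] \<Longrightarrow> ncols (sm f rs cs) = length cs"
  by (cases rs) (auto simp: ncols_def sm_def)
lemma nth_sm: "i < length rs \<Longrightarrow> j < length cs \<Longrightarrow> sm f rs cs ! i ! j = f (rs!i) (cs!j)"
  by (simp add: sm_def)

lemma cells_sm: "rs \<noteq> [] \<Longrightarrow> cells (sm f rs cs) = {(i,j). i < length rs \<and> j < length cs \<and> f (rs!i) (cs!j)}"
  by (auto simp: cells_def nrows_sm ncols_sm nth_sm)

lemma disconnect:
  fixes U :: "(nat \<times> nat) set"
  assumes sr: "sorted_wrt (<) rs" and sc: "sorted_wrt (<) cs" and ne: "rs \<noteq> []"
  and H: "\<And>r c c'. r\<in>set rs \<Longrightarrow> c\<in>set cs \<Longrightarrow> c'\<in>set cs \<Longrightarrow> f r c \<Longrightarrow> f r c' \<Longrightarrow> (r,c)\<in>U \<Longrightarrow> (r,c')\<notin>U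
        \<Longrightarrow> (\<exists>c''\<in>set cs. min c c' < c'' \<and> c'' < max c c')"
  and V: "\<And>c r r'. c\<in>set cs \<Longrightarrow> r\<in>set rs \<Longrightarrow> r'\<in>set rs \<Longrightarrow> f r c \<Longrightarrow> f r' c \<Longrightarrow> (r,c)\<in>U \<Longrightarrow> (r',c)\<notin>U
        \<Longrightarrow> (\<exists>r''\<in>set rs. min r r' < r'' \<and> r'' < max r r')"
  and x: "x \<in> cells (sm f rs cs)" "(rs!fst x, cs!snd x) \<in> U"
  and y: "y \<in> cells (sm f rs cs)" "(rs!fst y, cs!snd y) \<notin> U"
  shows "\<not> polyomino (sm f rs cs)"
proof
  assume P: "polyomino (sm f rs cs)"
  let ?Q = "sm f rs cs"
  let ?rel = "{(a, b). a \<in> cells ?Q \<and> b \<in> cells ?Q \<and> edge_adj a b}"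
  let ?UQ = "{(i,j). (rs!i, cs!j) \<in> U}"
  have stepU: "b \<in> ?UQ" if ab: "(a,b) \<in> ?rel" and aU: "a \<in> ?UQ" for a b
  proof (rule ccontr)
    assume bU: "b \<notin> ?UQ"
    obtain i j where a: "a = (i,j)" by (cases a)
    obtain i' j' where b: "b = (i',j')" by (cases b)
    have ca: "i < length rs" "j < length cs" "f (rs!i) (cs!j)"
      using ab a by (auto simp: cells_sm[OF ne])
    have cb: "i' < length rs" "j' < length cs" "f (rs!i') (cs!j')"
      using ab b by (auto simp: cells_sm[OF ne])
    have adj: "edge_adj (i,j) (i',j')" using ab a b by auto
    have aU': "(rs!i, cs!j) \<in> U" using aU a by auto
    have bU': "(rs!i', cs!j') \<notin> U" using bU b by auto
    show False
    proof (cases "i = i'")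
      case True
      with adj have jj: "j' = j + 1 \<or> j = j' + 1" by (auto simp: edge_adj_def)
      from H[of "rs!i" "cs!j" "cs!j'"] ca cb aU' bU' True
      obtain c'' where c'': "c'' \<in> set cs" "min (cs!j) (cs!j') < c''" "c'' < max (cs!j) (cs!j')"
        by (auto simp: nth_mem)
      then obtain k where k: "k < length cs" "c'' = cs!k" by (auto simp: in_set_conv_nth)
      have "min j j' < k \<and> k < max j j'"
        using c'' k strict_nth_less_iff[OF sc] ca cb
        by (cases "j < j'") (auto simp: min_def max_def split: if_splits)
      with jj show False by auto
    next
      case False
      with adj have jj: "j = j'" "i' = i + 1 \<or> i = i' + 1" by (auto simp: edge_adj_def)
      from V[of "cs!j" "rs!i" "rs!i'"] ca cb aU' bU' jj
      obtain r'' where r'': "r'' \<in> set rs" "min (rs!i) (rs!i') < r''" "r'' < max (rs!i) (rs!i')"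
        by (auto simp: nth_mem)
      then obtain k where k: "k < length rs" "r'' = rs!k" by (auto simp: in_set_conv_nth)
      have "min i i' < k \<and> k < max i i'"
        using r'' k strict_nth_less_iff[OF sr] ca cb
        by (cases "i < i'") (auto simp: min_def max_def split: if_splits)
      with jj show False by auto
    qed
  qed
  have "(x,y) \<in> ?rel\<^sup>*" using P x(1) y(1) unfolding polyomino_def by blast
  hence "y \<in> ?UQ" using x(2)
  proof (induction rule: rtrancl_induct)
    case base then show ?case by (cases x) auto
  next
    case (step b c) then show ?case using stepU[of b c] by blast
  qed
  with y(2) show False by (cases y) auto
qed


definition fc :: "nat \<Rightarrow> nat \<Rightarrow> nat \<Rightarrow> bool" where
  "fc n i j \<longleftrightarrow> j = 0 \<or> (i = 0 \<and> j = n+1) \<or> (i = 1 \<and> j = 1) \<or> (1 \<le> i \<and> i \<le> n \<and> (j + i = n+1 \<or> j + i = n+2))"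

lemma col_two:
  assumes "n \<ge> 3" "c \<noteq> 0" "a < b" "fc n a c" "fc n b c"
  shows "(c = n+1 \<and> a = 0 \<and> b = 1) \<or> (c = 1 \<and> a = 1 \<and> b = n) \<or> (2 \<le> c \<and> c \<le> n \<and> a + c = n+1 \<and> b = a + 1)"
  using assms unfolding fc_def by auto

lemma occ:
  assumes n: "n \<ge> 3" and ab: "a < b" "b \<le> n" and cs: "c1 < c2" "c2 < c3" "c3 < c4" "c4 \<le> n+1"
  and f: "fc n a c1" "fc n b c1" "\<not> fc n a c2" "fc n b c2" "\<not> fc n a c3" "\<not> fc n b c3" "fc n a c4" "fc n b c4"
  shows "a = 0 \<and> b = 1 \<and> c1 = 0 \<and> c2 = 1 \<and> c4 = n+1 \<and> 2 \<le> c3 \<and> c3 + 1 \<le> n"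
proof -
  have c4: "(c4 = n+1 \<and> a = 0 \<and> b = 1) \<or> (c4 = 1 \<and> a = 1 \<and> b = n) \<or> (2 \<le> c4 \<and> c4 \<le> n \<and> a + c4 = n+1 \<and> b = a + 1)"
    using col_two[OF n _ ab(1) f(7) f(8)] cs by auto
  have c1: "c1 = 0"
  proof (rule ccontr)
    assume "c1 \<noteq> 0"
    from col_two[OF n this ab(1) f(1) f(2)]
    have "(c1 = n+1 \<and> a = 0 \<and> b = 1) \<or> (c1 = 1 \<and> a = 1 \<and> b = n) \<or> (2 \<le> c1 \<and> c1 \<le> n \<and> a + c1 = n+1 \<and> b = a + 1)" .
    with c4 cs n show False by auto
  qed
  have c4': "c4 = n+1 \<and> a = 0 \<and> b = 1"
  proof -
    have "\<not> (c4 = 1 \<and> a = 1 \<and> b = n)" using cs by auto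
    moreover have "\<not> (2 \<le> c4 \<and> c4 \<le> n \<and> a + c4 = n+1 \<and> b = a + 1)"
    proof
      assume h: "2 \<le> c4 \<and> c4 \<le> n \<and> a + c4 = n+1 \<and> b = a + 1"
      have "c2 \<noteq> 0" using cs by auto
      with f(4) h cs n show False unfolding fc_def by auto
    qed
    ultimately show ?thesis using c4 by blast
  qed
  have c2: "c2 = 1" using f(3) f(4) c4' cs c1 unfolding fc_def by auto
  have c3: "2 \<le> c3 \<and> c3 + 1 \<le> n" using f(5) f(6) c4' cs c2 unfolding fc_def by auto
  show ?thesis using c1 c2 c3 c4' by auto
qed

definition Urow :: "nat \<Rightarrow> (nat \<times> nat) set" where
  "Urow r = {(i,j). i < r \<and> j \<noteq> 0 \<and> \<not>(i = 1 \<and> j = 1)}"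

lemma H_row:
  assumes "2 \<le> r" "r \<le> n" "2 \<le> c3" "c3 + 1 \<le> n" "r0 \<le> n" "c \<le> n+1" "c' \<le> n+1"
    "fc n r0 c" "fc n r0 c'" "(r0,c) \<in> Urow r" "(r0,c') \<notin> Urow r"
  shows "(min c c' < 1 \<and> 1 < max c c') \<or> (min c c' < c3 \<and> c3 < max c c')"
  using assms unfolding fc_def Urow_def by auto

lemma V_row:
  assumes "2 \<le> r" "r \<le> n" "r0 \<le> n" "r0' \<le> n" "r0' \<noteq> r"
    "fc n r0 c" "fc n r0' c" "(r0,c) \<in> Urow r" "(r0',c) \<notin> Urow r"
  shows False
  using assms unfolding fc_def Urow_def by auto

lemma H_col:
  assumes "2 \<le> c" "c \<le> n" "2 \<le> c3" "c3 + 1 \<le> n" "r0 \<le> n" "c1 \<le> n+1" "c1' \<le> n+1" "c1' \<noteq> c"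
    "fc n r0 c1" "fc n r0 c1'" "c < c1" "\<not> c < c1'"
  shows "(min c1 c1' < 1 \<and> 1 < max c1 c1') \<or> (min c1 c1' < c3 \<and> c3 < max c1 c1')"
  using assms unfolding fc_def by auto


definition Fm :: "nat \<Rightarrow> bmat" where
  "Fm n = sm (fc n) [0..<n+1] [0..<n+2]"

lemma sm_nths: "map (\<lambda>row. nths row C) (nths (sm f rs cs) R) = sm f (nths rs R) (nths cs C)"
  by (simp add: sm_def nths_map)

lemma nths_upt_set:
  assumes "sorted_wrt (<) ks" "\<forall>k\<in>set ks. k < m"
  shows "nths [0..<m] (set ks) = ks"
proof -
  have s: "set (nths [0..<m] (set ks)) = set ks"
    using assms(2) by (auto simp: set_nths) (metis add_0 nth_upt)
  have "sorted_wrt (<) (nths [0..<m] (set ks))" by (rule strict_nths) simp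
  thus ?thesis using assms(1) s sorted_distinct_set_unique by (metis strict_sorted_iff)
qed

lemma len2: "length xs = 2 \<Longrightarrow> \<exists>a b. xs = [a,b]"
  by (auto simp: length_Suc_conv numeral_2_eq_2)
lemma len4: "length xs = 4 \<Longrightarrow> \<exists>a b c d. xs = [a,b,c,d]"
  by (auto simp: length_Suc_conv eval_nat_numeral)

lemma M_inf_sub_Fm:
  assumes "n \<ge> 3"
  shows "submatrix M_inf (Fm n)"
proof -
  have r: "nths [0..<n+1] (set [0,1]) = [0,1]" using assms by (intro nths_upt_set) auto
  have c: "nths [0..<n+2] (set [0,1,2,n+1]) = [0,1,2,n+1]" using assms by (intro nths_upt_set) auto
  have "map (\<lambda>row. nths row (set [0,1,2,n+1])) (nths (Fm n) (set [0,1])) = sm (fc n) [0,1] [0,1,2,n+1]"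
    unfolding Fm_def sm_nths r c ..
  also have "\<dots> = M_inf" using assms by (simp add: sm_def M_inf_def fc_def)
  finally show ?thesis unfolding submatrix_def by metis
qed


lemma minimal_Fm:
  assumes n: "n \<ge> 3" and PQ: "polyomino Q" and MQ: "submatrix M_inf Q" and QF: "submatrix Q (Fm n)"
  shows "Q = Fm n"
proof -
  obtain R C where Qe: "Q = sm (fc n) (nths [0..<n+1] R) (nths [0..<n+2] C)"
    using sub_sm[of Q "fc n"] QF unfolding Fm_def by blast
  define rs where "rs = nths [0..<n+1] R"
  define cs where "cs = nths [0..<n+2] C"
  have Q: "Q = sm (fc n) rs cs" using Qe rs_def cs_def by simp
  have sr: "sorted_wrt (<) rs" unfolding rs_def by (rule strict_nths) (rule sorted_wrt_upt)
  have sc: "sorted_wrt (<) cs" unfolding cs_def by (rule strict_nths) (rule sorted_wrt_upt)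
  have rsb: "\<forall>r\<in>set rs. r \<le> n" unfolding rs_def using set_nths_subset by fastforce
  have csb: "\<forall>c\<in>set cs. c \<le> n+1" unfolding cs_def using set_nths_subset by fastforce
  have ne: "rs \<noteq> []" using PQ unfolding Q polyomino_def is_matrix_def by (auto simp: sm_def)
  obtain R' C' where MI: "M_inf = sm (fc n) (nths rs R') (nths cs C')"
    using sub_sm[of M_inf "fc n" rs cs] MQ Q by blast
  define rs' where "rs' = nths rs R'"
  define cs' where "cs' = nths cs C'"
  have MI': "M_inf = sm (fc n) rs' cs'" using MI rs'_def cs'_def by simp
  have "length rs' = 2" using arg_cong[OF MI', of length] by (simp add: M_inf_def sm_def)
  then obtain a b where ab: "rs' = [a,b]" using len2 by blast
  have "length cs' = 4" using arg_cong[OF MI', of "\<lambda>M. length (hd M)"] ab by (simp add: M_inf_def sm_def)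
  then obtain c1 c2 c3 c4 where cc: "cs' = [c1,c2,c3,c4]" using len4 by blast
  have sr': "sorted_wrt (<) rs'" unfolding rs'_def using sr by (rule strict_nths)
  have sc': "sorted_wrt (<) cs'" unfolding cs'_def using sc by (rule strict_nths)
  have ss1: "set rs' \<subseteq> set rs" unfolding rs'_def by (rule set_nths_subset)
  have ss2: "set cs' \<subseteq> set cs" unfolding cs'_def by (rule set_nths_subset)
  have abin: "a \<in> set rs" "b \<in> set rs" using ab ss1 by auto
  have cin: "c1 \<in> set cs" "c2 \<in> set cs" "c3 \<in> set cs" "c4 \<in> set cs"
    using cc ss2 by auto
  have ord: "a < b" "c1 < c2" "c2 < c3" "c3 < c4" using sr' sc' ab cc by auto
  have fv: "fc n a c1" "fc n b c1" "\<not> fc n a c2" "fc n b c2" "\<not> fc n a c3" "\<not> fc n b c3" "fc n a c4" "fc n b c4"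
    using MI' unfolding ab cc by (simp_all add: M_inf_def sm_def)
  have O: "a = 0 \<and> b = 1 \<and> c1 = 0 \<and> c2 = 1 \<and> c4 = n+1 \<and> 2 \<le> c3 \<and> c3 + 1 \<le> n"
    using occ[OF n ord(1) _ ord(2-4) _ fv] rsb csb abin cin by auto
  have r0: "0 \<in> set rs" and r1: "1 \<in> set rs" using O abin by auto
  have c0: "0 \<in> set cs" and c1': "1 \<in> set cs" and cN: "n+1 \<in> set cs" and c3in: "c3 \<in> set cs"
    and c3b: "2 \<le> c3" "c3 + 1 \<le> n" using O cin by auto
  obtain i0 where i0: "i0 < length rs" "rs ! i0 = 0" using r0 by (auto simp: in_set_conv_nth)
  obtain j0 where j0: "j0 < length cs" "cs ! j0 = 0" using c0 by (auto simp: in_set_conv_nth)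
  obtain jN where jN: "jN < length cs" "cs ! jN = n+1" using cN by (auto simp: in_set_conv_nth)
  have xc: "(i0, jN) \<in> cells (sm (fc n) rs cs)" using i0 jN by (simp add: cells_sm[OF ne] fc_def)
  have yc: "(i0, j0) \<in> cells (sm (fc n) rs cs)" using i0 j0 by (simp add: cells_sm[OF ne] fc_def)
  have wit: "\<exists>c''\<in>set cs. min c c' < c'' \<and> c'' < max c c'"
    if "(min c c' < 1 \<and> 1 < max c c') \<or> (min c c' < c3 \<and> c3 < max c c')" for c c'
    using that c1' c3in by blast
  have allr: "r \<in> set rs" if r: "2 \<le> r" "r \<le> n" for r
  proof (rule ccontr)
    assume rn: "r \<notin> set rs"
    have "\<not> polyomino (sm (fc n) rs cs)"
    proof (rule disconnect[OF sr sc ne, where U = "Urow r"])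
      fix r0 c c' assume h: "r0 \<in> set rs" "c \<in> set cs" "c' \<in> set cs" "fc n r0 c" "fc n r0 c'"
        "(r0, c) \<in> Urow r" "(r0, c') \<notin> Urow r"
      show "\<exists>c''\<in>set cs. min c c' < c'' \<and> c'' < max c c'"
        by (rule wit, rule H_row[OF r c3b]) (use h rsb csb in auto)
    next
      fix c r0 r0' assume h: "c \<in> set cs" "r0 \<in> set rs" "r0' \<in> set rs" "fc n r0 c" "fc n r0' c"
        "(r0, c) \<in> Urow r" "(r0', c) \<notin> Urow r"
      have "r0' \<noteq> r" using h rn by auto
      with V_row[OF r] h rsb show "\<exists>r''\<in>set rs. min r0 r0' < r'' \<and> r'' < max r0 r0'" by blast
    next
      show "(i0, jN) \<in> cells (sm (fc n) rs cs)" by (rule xc)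
      show "(rs ! fst (i0, jN), cs ! snd (i0, jN)) \<in> Urow r" using i0 jN r by (simp add: Urow_def)
      show "(i0, j0) \<in> cells (sm (fc n) rs cs)" by (rule yc)
      show "(rs ! fst (i0, j0), cs ! snd (i0, j0)) \<notin> Urow r" using i0 j0 by (simp add: Urow_def)
    qed
    with PQ Q show False by simp
  qed
  have allc: "c \<in> set cs" if c: "2 \<le> c" "c \<le> n" for c
  proof (rule ccontr)
    assume cn: "c \<notin> set cs"
    have "\<not> polyomino (sm (fc n) rs cs)"
    proof (rule disconnect[OF sr sc ne, where U = "{(i,j). c < j}"])
      fix r0 c5 c6 assume h: "r0 \<in> set rs" "c5 \<in> set cs" "c6 \<in> set cs" "fc n r0 c5" "fc n r0 c6"
        "(r0, c5) \<in> {(i,j). c < j}" "(r0, c6) \<notin> {(i,j). c < j}"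
      have "c6 \<noteq> c" using h cn by auto
      then show "\<exists>c''\<in>set cs. min c5 c6 < c'' \<and> c'' < max c5 c6"
        by (intro wit H_col[OF c c3b]) (use h rsb csb in auto)
    next
      fix c5 r0 r0' assume h: "c5 \<in> set cs" "r0 \<in> set rs" "r0' \<in> set rs" "fc n r0 c5" "fc n r0' c5"
        "(r0, c5) \<in> {(i,j). c < j}" "(r0', c5) \<notin> {(i,j). c < j}"
      then show "\<exists>r''\<in>set rs. min r0 r0' < r'' \<and> r'' < max r0 r0'" by auto
    next
      show "(i0, jN) \<in> cells (sm (fc n) rs cs)" by (rule xc)
      show "(rs ! fst (i0, jN), cs ! snd (i0, jN)) \<in> {(i,j). c < j}" using i0 jN c by simp
      show "(i0, j0) \<in> cells (sm (fc n) rs cs)" by (rule yc)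
      show "(rs ! fst (i0, j0), cs ! snd (i0, j0)) \<notin> {(i,j). c < j}" using i0 j0 by simp
    qed
    with PQ Q show False by simp
  qed
  have "set rs = set [0..<n+1]"
  proof
    show "set rs \<subseteq> set [0..<n+1]" using rsb by auto
    show "set [0..<n+1] \<subseteq> set rs"
    proof
      fix r assume "r \<in> set [0..<n+1]"
      hence "r \<le> n" by auto
      thus "r \<in> set rs" using allr r0 r1 by (cases "r \<le> 1") (auto simp: le_Suc_eq)
    qed
  qed
  hence rsE: "rs = [0..<n+1]"
    using sr by (intro sorted_distinct_set_unique) (auto simp: strict_sorted_iff simp del: upt_Suc)
  have "set cs = set [0..<n+2]"
  proof
    show "set cs \<subseteq> set [0..<n+2]" using csb by auto
    show "set [0..<n+2] \<subseteq> set cs"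
    proof
      fix c assume "c \<in> set [0..<n+2]"
      hence "c \<le> n+1" by auto
      thus "c \<in> set cs" using allc c0 c1' cN
        by (cases "c \<le> 1"; cases "c = n+1") (auto simp: le_Suc_eq)
    qed
  qed
  hence csE: "cs = [0..<n+2]"
    using sc by (intro sorted_distinct_set_unique) (auto simp: strict_sorted_iff simp del: upt_Suc)
  show ?thesis using Q rsE csE by (simp add: Fm_def)
qed


lemma cells_Fm: "cells (Fm n) = {(i,j). i \<le> n \<and> j \<le> n+1 \<and> fc n i j}"
  unfolding Fm_def by (subst cells_sm) (auto simp del: upt_Suc simp: less_Suc_eq_le)

lemma poly_Fm:
  assumes n: "n \<ge> 3"
  shows "polyomino (Fm n)"
proof -
  have nr: "nrows (Fm n) = n+1" unfolding Fm_def by (simp add: nrows_sm del: upt_Suc)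
  have nc: "ncols (Fm n) = n+2" unfolding Fm_def by (subst ncols_sm) (simp_all del: upt_Suc)
  have en: "Fm n ! i ! j = fc n i j" if "i < n+1" "j < n+2" for i j
    unfolding Fm_def using that by (subst nth_sm) (simp_all del: upt_Suc)
  have mat: "is_matrix (Fm n)"
    unfolding is_matrix_def nc by (auto simp: Fm_def sm_def simp del: upt_Suc)
  have rowsok: "\<forall>i < nrows (Fm n). \<exists>j < ncols (Fm n). Fm n ! i ! j"
    unfolding nr nc using en by (auto simp: fc_def)
  have colsok: "\<forall>j < ncols (Fm n). \<exists>i < nrows (Fm n). Fm n ! i ! j"
  proof (intro allI impI)
    fix j assume j: "j < ncols (Fm n)"
    show "\<exists>i < nrows (Fm n). Fm n ! i ! j"
    proof (cases "j = 0 \<or> j = n+1")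
      case True thus ?thesis using j en unfolding nr nc by (intro exI[of _ 0]) (auto simp: fc_def)
    next
      case False
      show ?thesis
      proof (cases "j = 1")
        case True thus ?thesis using j en n unfolding nr nc by (intro exI[of _ 1]) (auto simp: fc_def)
      next
        case False2: False
        show ?thesis using j en n False False2 unfolding nr nc
          by (intro exI[of _ "n+1-j"]) (auto simp: fc_def)
      qed
    qed
  qed
  define rel where "rel = {(a, b). a \<in> cells (Fm n) \<and> b \<in> cells (Fm n) \<and> edge_adj a b}"
  have symr: "sym rel" unfolding rel_def sym_def edge_adj_def by auto
  have E: "(x, (0,0)) \<in> rel\<^sup>*" if "x \<in> cells (Fm n)" "y \<in> cells (Fm n)" "edge_adj x y" "(y,(0,0)) \<in> rel\<^sup>*" for x y
    using that by (intro converse_rtrancl_into_rtrancl[of x y]) (auto simp: rel_def)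
  have col0: "((i,0), (0,0)) \<in> rel\<^sup>*" if "i \<le> n" for i
    using that
  proof (induction i)
    case 0 thus ?case by simp
  next
    case (Suc i)
    show ?case by (rule E[of _ "(i,0)"]) (use Suc in \<open>auto simp: cells_Fm fc_def edge_adj_def\<close>)
  qed
  have stair: "((n-k, n+1-(n-k)), (0,0)) \<in> rel\<^sup>* \<and> ((n-k, n+2-(n-k)), (0,0)) \<in> rel\<^sup>*" if "k < n" for k
    using that
  proof (induction k)
    case 0
    have a: "((n, 1), (0,0)) \<in> rel\<^sup>*"
      by (rule E[of _ "(n,0)"]) (use col0[of n] in \<open>auto simp: cells_Fm fc_def edge_adj_def\<close>)
    have b: "((n, 2), (0,0)) \<in> rel\<^sup>*"
      by (rule E[of _ "(n,1)"]) (use a n in \<open>auto simp: cells_Fm fc_def edge_adj_def\<close>)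
    show ?case using a b by (simp add: numeral_2_eq_2)
  next
    case (Suc k)
    hence IH: "((n-k, n+2-(n-k)), (0,0)) \<in> rel\<^sup>*" by simp
    have a: "((n - Suc k, n+1-(n - Suc k)), (0,0)) \<in> rel\<^sup>*"
      by (rule E[OF _ _ _ IH]) (use Suc.prems in \<open>auto simp: cells_Fm fc_def edge_adj_def\<close>)
    have b: "((n - Suc k, n+2-(n - Suc k)), (0,0)) \<in> rel\<^sup>*"
      by (rule E[OF _ _ _ a]) (use Suc.prems in \<open>auto simp: cells_Fm fc_def edge_adj_def\<close>)
    show ?case using a b by simp
  qed
  have all: "(x, (0,0)) \<in> rel\<^sup>*" if x: "x \<in> cells (Fm n)" for x
  proof -
    obtain i j where xe: "x = (i,j)" by (cases x)
    have c: "i \<le> n" "j \<le> n+1" "fc n i j" using x xe by (auto simp: cells_Fm)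
    show ?thesis
    proof (cases "j = 0")
      case True thus ?thesis using col0 c xe by simp
    next
      case j0: False
      show ?thesis
      proof (cases "i = 0")
        case True
        hence jn: "j = n+1" using c j0 by (auto simp: fc_def)
        have B1: "((1, n+1), (0,0)) \<in> rel\<^sup>*" using stair[of "n-1"] n by simp
        show ?thesis unfolding xe True jn
          by (rule E[OF _ _ _ B1]) (use n in \<open>auto simp: cells_Fm fc_def edge_adj_def\<close>)
      next
        case i0: False
        show ?thesis
        proof (cases "i = 1 \<and> j = 1")
          case True
          show ?thesis unfolding xe using True
            by (intro E[OF _ _ _ col0[of 1]]) (use n in \<open>auto simp: cells_Fm fc_def edge_adj_def\<close>)
        next
          case False
          hence "j + i = n+1 \<or> j + i = n+2" using c i0 j0 by (auto simp: fc_def)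
          moreover have "n - (n - i) = i" using c by simp
          moreover have "n - i < n" using c i0 by simp
          ultimately show ?thesis using stair[of "n-i"] xe
            by (metis add_diff_cancel_right')
        qed
      qed
    qed
  qed
  have conn: "\<forall>x\<in>cells (Fm n). \<forall>y\<in>cells (Fm n). (x, y) \<in> rel\<^sup>*"
  proof (intro ballI)
    fix x y assume "x \<in> cells (Fm n)" "y \<in> cells (Fm n)"
    hence "(x,(0,0)) \<in> rel\<^sup>*" "(y,(0,0)) \<in> rel\<^sup>*" using all by auto
    moreover have "sym (rel\<^sup>*)" using symr by (rule sym_rtrancl)
    ultimately show "(x,y) \<in> rel\<^sup>*" by (meson rtrancl_trans symD)
  qed
  show ?thesis unfolding polyomino_def using mat rowsok colsok conn unfolding rel_def by blast
qed

lemma Fm_basis: "n \<ge> 3 \<Longrightarrow> Fm n \<in> p_basis (Av_P M_inf)"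
  unfolding p_basis_def Av_P_def
  using poly_Fm M_inf_sub_Fm minimal_Fm by blast

theorem proposition10:
  shows "infinite (p_basis (Av_P M_inf))"
proof
  assume fin: "finite (p_basis (Av_P M_inf))"
  have sub: "Fm ` {3..} \<subseteq> p_basis (Av_P M_inf)" using Fm_basis by auto
  have inj: "inj_on Fm {3..}"
  proof (rule inj_onI)
    fix a b assume "Fm a = Fm b"
    hence "length (Fm a) = length (Fm b)" by simp
    thus "a = b" by (simp add: Fm_def sm_def del: upt_Suc)
  qed
  have "finite (Fm ` {3..})" using finite_subset[OF sub fin] .
  hence "finite ({3..} :: nat set)" using finite_image_iff[OF inj] by simp
  thus False using infinite_Ici[of "3::nat"] by simp
qed

end
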